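(* Let $A$ be an integral domain with a non-trivial $\mathbb{Z}$-grading and let $\alpha$ be a nonzero homogeneous element of $A$. Then there exist homogeneous elements $f\in\alpha A\setminus\{0\}$ and $w\in A_f^*$ such that $A_f=(A_f)_0[w,w^{-1}]$, and this ring is isomorphic to the Laurent polynomial ring in one variable over $(A_f)_0$.
   Context: $A_f$ is the localization of $A$ at the powers of $f$, with the $\mathbb{Z}$-grading extended from $A$; $(A_f)_0$ is its subring of degree-zero elements. *)

theory Defs
  imports Main "HOL-Computational_Algebra.Fraction_Field"
begin

definition Z_grading :: "(int \<Rightarrow> 'a::comm_ring_1 set) \<Rightarrow> bool" where
  "Z_grading gr \<longleftrightarrow>
     (\<forall>n. 0 \<in> gr n \<and> (\<forall>x\<in>gr n. \<forall>y\<in>gr n. x + y \<in> gr n \<and> - x \<in> gr n)) \<and>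
     (\<forall>m n. \<forall>x\<in>gr m. \<forall>y\<in>gr n. x * y \<in> gr (m + n)) \<and>
     (\<forall>a. \<exists>!c :: int \<Rightarrow> 'a. finite {n. c n \<noteq> 0} \<and> (\<forall>n. c n \<in> gr n) \<and>
            a = (\<Sum>n\<in>{n. c n \<noteq> 0}. c n))"

definition nontrivial_grading :: "(int \<Rightarrow> 'a::comm_ring_1 set) \<Rightarrow> bool" where
  "nontrivial_grading gr \<longleftrightarrow> (\<exists>n. n \<noteq> 0 \<and> gr n \<noteq> {0})"

definition homogeneous :: "(int \<Rightarrow> 'a set) \<Rightarrow> 'a \<Rightarrow> bool" where
  "homogeneous gr a \<longleftrightarrow> (\<exists>n. a \<in> gr n)"

text \<open>Localization A_f of a domain A at the powers of f (f nonzero), realised inside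
  the fraction field: A_f = { a / f^k }.\<close>
definition loc :: "'a::idom \<Rightarrow> 'a fract set" where
  "loc f = {Fract a (f ^ k) | a k. True}"

text \<open>Degree-d component of A_f for the grading extended from A, where f is homogeneous
  of degree e: the elements a / f^k with a homogeneous of degree d + k e.\<close>
definition loc_piece :: "(int \<Rightarrow> 'a::idom set) \<Rightarrow> 'a \<Rightarrow> int \<Rightarrow> int \<Rightarrow> 'a fract set" where
  "loc_piece gr f e d = {Fract a (f ^ k) | a k. a \<in> gr (d + int k * e)}"

definition loc_homogeneous :: "(int \<Rightarrow> 'a::idom set) \<Rightarrow> 'a \<Rightarrow> int \<Rightarrow> 'a fract \<Rightarrow> bool" where
  "loc_homogeneous gr f e w \<longleftrightarrow> (\<exists>d. w \<in> loc_piece gr f e d)"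

definition laurent_adjoin :: "'a fract set \<Rightarrow> 'a fract \<Rightarrow> 'a::idom fract set" where
  "laurent_adjoin R w =
     {\<Sum>i\<in>I. c i * w powi i | I c. finite I \<and> (\<forall>i\<in>I. c i \<in> R)}"

text \<open>w is Laurent-independent over R: the natural map R[t,t^-1] -> R[w,w^-1], t |-> w,
  is injective (hence an isomorphism onto R[w,w^-1]).\<close>
definition laurent_independent :: "'a fract set \<Rightarrow> 'a::idom fract \<Rightarrow> bool" where
  "laurent_independent R w \<longleftrightarrow>
     (\<forall>c :: int \<Rightarrow> 'a fract. finite {i. c i \<noteq> 0} \<and> (\<forall>i. c i \<in> R) \<and>
        (\<Sum>i\<in>{i. c i \<noteq> 0}. c i * w powi i) = 0 \<longrightarrow> (\<forall>i. c i = 0))"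

end

theory Submission
  imports Defs
begin

lemma zg_D1: "Z_grading gr \<Longrightarrow> (\<forall>n. 0 \<in> gr n \<and> (\<forall>x\<in>gr n. \<forall>y\<in>gr n. x + y \<in> gr n \<and> - x \<in> gr n))"
  unfolding Z_grading_def by (elim conjE)

lemma zg_D2: "Z_grading gr \<Longrightarrow> (\<forall>m n. \<forall>x\<in>gr m. \<forall>y\<in>gr n. x * y \<in> gr (m + n))"
  unfolding Z_grading_def by (elim conjE)

lemma zg_D3: "Z_grading (gr :: int \<Rightarrow> 'a::comm_ring_1 set) \<Longrightarrow> (\<forall>a. \<exists>!c :: int \<Rightarrow> 'a. finite {n. c n \<noteq> 0} \<and> (\<forall>n. c n \<in> gr n) \<and>
            a = (\<Sum>n\<in>{n. c n \<noteq> 0}. c n))"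
  unfolding Z_grading_def by (elim conjE)

lemma zg_zero: "Z_grading gr \<Longrightarrow> 0 \<in> gr n"
  using zg_D1 by blast

lemma zg_mult: "Z_grading gr \<Longrightarrow> x \<in> gr m \<Longrightarrow> y \<in> gr n \<Longrightarrow> x * y \<in> gr (m + n)"
  using zg_D2 by blast

lemma zg_mult': "Z_grading gr \<Longrightarrow> x \<in> gr m \<Longrightarrow> y \<in> gr n \<Longrightarrow> k = m + n \<Longrightarrow> x * y \<in> gr k"
  using zg_mult by blast

lemma zg_decomp: assumes zg: "Z_grading (gr :: int \<Rightarrow> 'a::comm_ring_1 set)" shows
   "\<exists>c. finite {n. c n \<noteq> 0} \<and> (\<forall>n. c n \<in> gr n) \<and> a = (\<Sum>n\<in>{n. c n \<noteq> 0}. c n)"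
  by (rule ex1_implies_ex[OF spec[OF zg_D3[OF zg]]])

lemma zg_unique0:
  assumes zg: "Z_grading gr" and fin: "finite S" and inj: "inj_on h S"
    and hb: "\<forall>i\<in>S. b i \<in> gr (h i)" and s0: "sum b S = 0"
  shows "\<forall>i\<in>S. b i = 0"
proof -
  define c where "c n = (if n \<in> h ` S then b (the_inv_into S h n) else 0)" for n
  have ch: "c (h i) = b i" if "i \<in> S" for i
    using that inj by (simp add: c_def the_inv_into_f_f)
  have cgr: "\<forall>n. c n \<in> gr n"
  proof
    fix n show "c n \<in> gr n"
    proof (cases "n \<in> h ` S")
      case True
      then obtain i where "i \<in> S" "n = h i" by blast
      then show ?thesis using ch hb by simp
    next
      case False then show ?thesis by (simp add: c_def zg_zero[OF zg])
    qed
  qed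
  have sub: "{n. c n \<noteq> 0} \<subseteq> h ` S" by (auto simp: c_def split: if_splits)
  have finc: "finite {n. c n \<noteq> 0}" using sub fin finite_subset by blast
  have "(\<Sum>n\<in>{n. c n \<noteq> 0}. c n) = (\<Sum>n\<in>h ` S. c n)"
    by (rule sum.mono_neutral_left) (use sub fin in auto)
  also have "\<dots> = (\<Sum>i\<in>S. c (h i))" by (rule sum.reindex[OF inj, unfolded comp_def])
  also have "\<dots> = sum b S" using ch by simp
  finally have sc: "(0::'a) = (\<Sum>n\<in>{n. c n \<noteq> 0}. c n)" using s0 by simp
  have z: "finite {n. (\<lambda>_. 0::'a) n \<noteq> 0} \<and> (\<forall>n. (\<lambda>_. 0::'a) n \<in> gr n) \<and>
      (0::'a) = (\<Sum>n\<in>{n. (\<lambda>_. 0::'a) n \<noteq> 0}. (\<lambda>_. 0::'a) n)"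
    using zg_zero[OF zg] by simp
  define P where "P = (\<lambda>c :: int \<Rightarrow> 'a. finite {n. c n \<noteq> 0} \<and> (\<forall>n. c n \<in> gr n) \<and>
            (0::'a) = (\<Sum>n\<in>{n. c n \<noteq> 0}. c n))"
  have ex1: "\<exists>!c. P c" unfolding P_def by (rule spec[OF zg_D3[OF zg]])
  have Pc: "P c" unfolding P_def using finc cgr sc by (intro conjI)
  have P0: "P (\<lambda>_. 0)" unfolding P_def using z by (intro conjI) simp_all
  have cz: "c = (\<lambda>_. 0)" using the1_equality[of P c, OF ex1 Pc] the1_equality[of P "\<lambda>_. 0", OF ex1 P0] by simp
  show ?thesis
  proof
    fix i assume "i \<in> S"
    then have "b i = c (h i)" using ch by simp
    then show "b i = 0" using cz by simp
  qed
qed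

lemma pow_deg: "Z_grading gr \<Longrightarrow> a \<in> gr m \<Longrightarrow> f \<in> gr e \<Longrightarrow> a * f ^ j \<in> gr (m + int j * e)"
proof (induction j)
  case 0 then show ?case by simp
next
  case (Suc j)
  have "a * f ^ j * f \<in> gr (m + int j * e + e)" using Suc zg_mult by blast
  then show ?case by (simp add: algebra_simps)
qed

lemma loc_iff: "x \<in> loc f \<longleftrightarrow> (\<exists>a k. x = Fract a (f ^ k))"
  unfolding loc_def by auto

lemma piece_iff: "x \<in> loc_piece gr f e d \<longleftrightarrow> (\<exists>a k. x = Fract a (f ^ k) \<and> a \<in> gr (d + int k * e))"
  unfolding loc_piece_def by auto

lemma loc_add: "(f::'a::idom) \<noteq> 0 \<Longrightarrow> x \<in> loc f \<Longrightarrow> y \<in> loc f \<Longrightarrow> x + y \<in> loc f"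
  unfolding loc_iff
proof (elim exE)
  fix a k b l assume "f \<noteq> 0" "x = Fract a (f ^ k)" "y = Fract b (f ^ l)"
  then have "x + y = Fract (a * f ^ l + b * f ^ k) (f ^ (k + l))" by (simp add: power_add)
  then show "\<exists>a k. x + y = Fract a (f ^ k)" by blast
qed

lemma loc_mult: "x \<in> loc f \<Longrightarrow> y \<in> loc f \<Longrightarrow> x * y \<in> loc f"
  unfolding loc_iff
proof (elim exE)
  fix a k b l assume "x = Fract a (f ^ k)" "y = Fract b (f ^ l)"
  then have "x * y = Fract (a * b) (f ^ (k + l))" by (simp add: power_add)
  then show "\<exists>a k. x * y = Fract a (f ^ k)" by blast
qed

lemma loc_zero: "0 \<in> loc f"
  unfolding loc_iff by (rule exI[of _ 0], rule exI[of _ 0]) (simp add: fract_collapse)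

lemma loc_sum: assumes "(f::'a::idom) \<noteq> 0" "finite I" "\<forall>i\<in>I. x i \<in> loc f" shows "sum x I \<in> loc f"
  using assms(2,3) by (induction I rule: finite_induct) (auto simp: loc_zero loc_add assms(1))

lemma piece_loc: "loc_piece gr f e d \<subseteq> loc f"
  unfolding loc_def loc_piece_def by blast

lemma piece_mult: "Z_grading gr \<Longrightarrow> x \<in> loc_piece gr f e d \<Longrightarrow> y \<in> loc_piece gr f e d'
   \<Longrightarrow> x * y \<in> loc_piece gr f e (d + d')"
  unfolding piece_iff
proof (elim exE conjE)
  fix a k b l assume zg: "Z_grading gr" and x: "x = Fract a (f ^ k)" and a: "a \<in> gr (d + int k * e)"
    and y: "y = Fract b (f ^ l)" and b: "b \<in> gr (d' + int l * e)"
  have "a * b \<in> gr (d + d' + int (k + l) * e)"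
    by (rule zg_mult'[OF zg a b]) (simp add: algebra_simps)
  then show "\<exists>a k. x * y = Fract a (f ^ k) \<and> a \<in> gr (d + d' + int k * e)"
    using x y by (metis mult_fract power_add)
qed

lemma piece_pow: "Z_grading gr \<Longrightarrow> f \<in> gr e \<Longrightarrow> 1 \<in> loc_piece gr f e 0 \<Longrightarrow> x \<in> loc_piece gr f e d
   \<Longrightarrow> x ^ n \<in> loc_piece gr f e (int n * d)"
proof (induction n)
  case 0 then show ?case by simp
next
  case (Suc n)
  have "x * x ^ n \<in> loc_piece gr f e (d + int n * d)" using Suc piece_mult by blast
  then show ?case by (simp add: algebra_simps)
qed

lemma piece_common:
  assumes zg: "Z_grading gr" and fgr: "f \<in> gr e" and f0: "(f::'a::idom) \<noteq> 0"
    and fin: "finite S" and mem: "\<forall>i\<in>S. x i \<in> loc_piece gr f e (dg i)"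
  shows "\<exists>K b. \<forall>i\<in>S. x i = Fract (b i) (f ^ K) \<and> b i \<in> gr (dg i + int K * e)"
proof -
  from mem have "\<forall>i\<in>S. \<exists>a k. x i = Fract a (f ^ k) \<and> a \<in> gr (dg i + int k * e)"
    unfolding piece_iff by blast
  then obtain A k where Ak: "\<forall>i\<in>S. x i = Fract (A i) (f ^ k i) \<and> A i \<in> gr (dg i + int (k i) * e)"
    by metis
  define K where "K = sum k S"
  have le: "k i \<le> K" if "i \<in> S" for i unfolding K_def using fin that by (intro member_le_sum) auto
  show ?thesis
  proof (intro exI ballI conjI)
    fix i assume i: "i \<in> S"
    have "x i = Fract (f ^ (K - k i) * A i) (f ^ (K - k i) * f ^ k i)"
      using Ak i f0 by (simp add: mult_fract_cancel)
    also have "f ^ (K - k i) * f ^ k i = f ^ K" using le[OF i] by (simp add: power_add[symmetric])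
    finally show "x i = Fract (A i * f ^ (K - k i)) (f ^ K)" by (simp add: mult.commute)
    have "A i * f ^ (K - k i) \<in> gr (dg i + int (k i) * e + int (K - k i) * e)"
      using pow_deg[OF zg _ fgr] Ak i by blast
    also have "dg i + int (k i) * e + int (K - k i) * e = dg i + int K * e"
      using le[OF i] by (simp add: algebra_simps of_nat_diff)
    finally show "A i * f ^ (K - k i) \<in> gr (dg i + int K * e)" .
  qed
qed

lemma fract_sum: assumes "(d::'a::idom) \<noteq> 0" "finite S" shows "(\<Sum>i\<in>S. Fract (b i) d) = Fract (sum b S) d"
  using assms(2)
proof (induction S rule: finite_induct)
  case empty then show ?case by (simp add: fract_collapse)
next
  case (insert x F)
  have "Fract (b x) d + Fract (sum b F) d = Fract (d * (b x + sum b F)) (d * d)"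
    using assms(1) by (simp add: algebra_simps)
  also have "\<dots> = Fract (b x + sum b F) d" using assms(1) by (simp add: mult_fract_cancel)
  finally show ?case using insert by simp
qed

theorem lemma2p10:
  fixes gr :: "int \<Rightarrow> 'a::idom set" and \<alpha> :: 'a
  assumes "Z_grading gr" and "nontrivial_grading gr"
    and "\<alpha> \<noteq> 0" and "homogeneous gr \<alpha>"
  shows "\<exists>f e w. f \<in> gr e \<and> (\<exists>b. f = \<alpha> * b) \<and> f \<noteq> 0 \<and>
           w \<in> loc f \<and> (\<exists>v\<in>loc f. w * v = 1) \<and> loc_homogeneous gr f e w \<and>
           loc f = laurent_adjoin (loc_piece gr f e 0) w \<and>
           laurent_independent (loc_piece gr f e 0) w"
proof -
  note zg = assms(1)
  from assms(4) obtain a where aa: "\<alpha> \<in> gr a" unfolding homogeneous_def by blast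
  from assms(2) obtain n0 where n0': "n0 \<noteq> 0" "gr n0 \<noteq> {0}"
    unfolding nontrivial_grading_def by blast
  have "\<exists>x0. x0 \<in> gr n0 \<and> x0 \<noteq> 0"
  proof (rule ccontr)
    assume "\<nexists>x0. x0 \<in> gr n0 \<and> x0 \<noteq> 0"
    then have "gr n0 \<subseteq> {0}" by auto
    then show False using n0'(2) zg_zero[OF zg, of n0] by auto
  qed
  then obtain x0 where n0: "n0 \<noteq> 0" "x0 \<in> gr n0" "x0 \<noteq> 0" using n0'(1) by blast
  define T where "T = {d. \<exists>p q m n. p \<in> gr m \<and> q \<in> gr n \<and> p \<noteq> 0 \<and> q \<noteq> 0 \<and> d = m - n}"
  have T0: "0 \<in> T"
  proof -
    have "\<alpha> \<in> gr a \<and> \<alpha> \<in> gr a \<and> \<alpha> \<noteq> 0 \<and> \<alpha> \<noteq> 0 \<and> (0::int) = a - a" using aa assms(3) by simp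
    then show ?thesis unfolding T_def by blast
  qed
  have Tadd: "d1 + d2 \<in> T" if "d1 \<in> T" "d2 \<in> T" for d1 d2
  proof -
    from that obtain p1 q1 m1 n1 p2 q2 m2 n2 where
      h: "p1 \<in> gr m1" "q1 \<in> gr n1" "p1 \<noteq> 0" "q1 \<noteq> 0" "d1 = m1 - n1"
         "p2 \<in> gr m2" "q2 \<in> gr n2" "p2 \<noteq> 0" "q2 \<noteq> 0" "d2 = m2 - n2"
      unfolding T_def by blast
    have "p1 * p2 \<in> gr (m1 + m2)" "q1 * q2 \<in> gr (n1 + n2)" using h zg_mult[OF zg] by auto
    moreover have "p1 * p2 \<noteq> 0" "q1 * q2 \<noteq> 0" using h by auto
    moreover have "d1 + d2 = (m1 + m2) - (n1 + n2)" using h by simp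
    ultimately show ?thesis unfolding T_def by blast
  qed
  have Tneg: "- d \<in> T" if "d \<in> T" for d
  proof -
    from that obtain p q m n where h: "p \<in> gr m" "q \<in> gr n" "p \<noteq> 0" "q \<noteq> 0" "d = m - n"
      unfolding T_def by blast
    then have "- d = n - m" by simp
    then show ?thesis unfolding T_def using h by blast
  qed
  have Tnat: "int k * d \<in> T" if "d \<in> T" for d k
  proof (induction k)
    case 0 then show ?case using T0 by simp
  next
    case (Suc k)
    have "d + int k * d \<in> T" using Tadd[OF that Suc] .
    then show ?case by (simp add: algebra_simps)
  qed
  have Tint: "z * d \<in> T" if "d \<in> T" for d z
  proof (cases "z \<ge> 0")
    case True
    then have "z = int (nat z)" by simp
    then show ?thesis using Tnat[OF that, of "nat z"] by metis
  next
    case False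
    then have "z * d = - (int (nat (- z)) * d)" by simp
    then show ?thesis using Tneg[OF Tnat[OF that, of "nat (-z)"]] by metis
  qed
  have n0T: "n0 \<in> T"
  proof -
    have "x0 * \<alpha> \<in> gr (n0 + a)" using zg_mult[OF zg n0(2) aa] .
    moreover have "x0 * \<alpha> \<noteq> 0" using n0 assms(3) by simp
    moreover have "n0 = (n0 + a) - a" by simp
    ultimately show ?thesis unfolding T_def using aa assms(3) by blast
  qed
  have ex: "\<exists>k::nat. 0 < k \<and> int k \<in> T"
  proof (cases "n0 > 0")
    case True then show ?thesis using n0T by (intro exI[of _ "nat n0"]) auto
  next
    case False then show ?thesis using Tneg[OF n0T] n0(1) by (intro exI[of _ "nat (- n0)"]) auto
  qed
  define g0 where "g0 = (LEAST k::nat. 0 < k \<and> int k \<in> T)"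
  have g0: "0 < g0 \<and> int g0 \<in> T" unfolding g0_def by (rule LeastI_ex[OF ex])
  have g0min: "g0 \<le> k" if "0 < k" "int k \<in> T" for k
    unfolding g0_def using that by (simp add: Least_le)
  define g where "g = int g0"
  have gpos: "g > 0" and gT: "g \<in> T" using g0 g_def by auto
  have Tdvd: "d = (d div g) * g" if "d \<in> T" for d
  proof -
    have "d mod g = d + (- (d div g)) * g" by (simp add: minus_div_mult_eq_mod[symmetric])
    then have mT: "d mod g \<in> T" using Tadd[OF that Tint[OF gT]] by metis
    have "d mod g = 0"
    proof (rule ccontr)
      assume "d mod g \<noteq> 0"
      then have "0 < d mod g" "d mod g < g" using pos_mod_sign[OF gpos, of d] pos_mod_bound[OF gpos, of d] by linarith+
      then have "g0 \<le> nat (d mod g)" using g0min[of "nat (d mod g)"] mT by simp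
      then show False using \<open>d mod g < g\<close> \<open>0 < d mod g\<close> g_def by simp
    qed
    then show ?thesis using div_mult_mod_eq[of d g] by simp
  qed
  from gT obtain p q mp mq where pq: "p \<in> gr mp" "q \<in> gr mq" "p \<noteq> 0" "q \<noteq> 0" "g = mp - mq"
    unfolding T_def by blast
  define f where "f = \<alpha> * (p * q)"
  define e where "e = a + (mp + mq)"
  have fgr: "f \<in> gr e" unfolding f_def e_def using zg_mult[OF zg aa zg_mult[OF zg pq(1) pq(2)]] .
  have f0: "f \<noteq> 0" using assms(3) pq f_def by simp
  define w where "w = Fract (\<alpha> * p * p) f"
  define v where "v = Fract (\<alpha> * q * q) f"
  have wv: "w * v = 1"
  proof -
    have "\<alpha> * p * p * (\<alpha> * q * q) = f * f" by (simp add: f_def algebra_simps)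
    then have "w * v = Fract (f * f) (f * f)" by (simp add: w_def v_def)
    also have "\<dots> = 1" using f0 mult_fract_cancel[of "f * f" 1 1] by (simp add: One_fract_def)
    finally show ?thesis .
  qed
  have w0: "w \<noteq> 0" using wv by auto
  have inv: "inverse w = v" using wv by (rule inverse_unique)
  have one_piece: "1 \<in> loc_piece gr f e 0"
    unfolding piece_iff
  proof (intro exI conjI)
    show "1 = Fract f (f ^ 1)" using f0 mult_fract_cancel[of f 1 1] by (simp add: One_fract_def)
    show "f \<in> gr (0 + int 1 * e)" using fgr by simp
  qed
  have wpiece: "w \<in> loc_piece gr f e g"
    unfolding piece_iff
  proof (intro exI conjI)
    show "w = Fract (\<alpha> * p * p) (f ^ 1)" by (simp add: w_def)
    have "\<alpha> * p \<in> gr (a + mp)" using zg_mult[OF zg aa pq(1)] .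
    then have "\<alpha> * p * p \<in> gr (a + mp + mp)" using zg_mult[OF zg _ pq(1)] by blast
    moreover have "a + mp + mp = g + int 1 * e" by (simp add: e_def pq(5))
    ultimately show "\<alpha> * p * p \<in> gr (g + int 1 * e)" by simp
  qed
  have vpiece: "v \<in> loc_piece gr f e (- g)"
    unfolding piece_iff
  proof (intro exI conjI)
    show "v = Fract (\<alpha> * q * q) (f ^ 1)" by (simp add: v_def)
    have "\<alpha> * q \<in> gr (a + mq)" using zg_mult[OF zg aa pq(2)] .
    then have "\<alpha> * q * q \<in> gr (a + mq + mq)" using zg_mult[OF zg _ pq(2)] by blast
    moreover have "a + mq + mq = - g + int 1 * e" by (simp add: e_def pq(5))
    ultimately show "\<alpha> * q * q \<in> gr (- g + int 1 * e)" by simp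
  qed
  have wpow: "w powi i \<in> loc_piece gr f e (i * g)" for i
  proof (cases "i \<ge> 0")
    case True
    then have "w powi i = w ^ nat i" by (simp add: power_int_def)
    moreover have "int (nat i) * g = i * g" using True by simp
    ultimately show ?thesis using piece_pow[OF zg fgr one_piece wpiece, of "nat i"] by metis
  next
    case False
    then have "w powi i = v ^ nat (- i)" by (simp add: power_int_def inv)
    moreover have "int (nat (- i)) * (- g) = i * g" using False by simp
    ultimately show ?thesis using piece_pow[OF zg fgr one_piece vpiece, of "nat (- i)"] by metis
  qed
  have wloc: "w \<in> loc f" using wpiece piece_loc by blast
  have vloc: "v \<in> loc f" using vpiece piece_loc by blast
  have sub1: "loc f \<subseteq> laurent_adjoin (loc_piece gr f e 0) w"
  proof
    fix x assume "x \<in> loc f"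
    then obtain b k where x: "x = Fract b (f ^ k)" unfolding loc_iff by blast
    obtain c where c: "finite {n. c n \<noteq> 0}" "\<forall>n. c n \<in> gr n" "b = (\<Sum>n\<in>{n. c n \<noteq> 0}. c n)"
      using zg_decomp[OF zg] by blast
    define N where "N = {n. c n \<noteq> 0}"
    define m where "m n = (n - int k * e) div g" for n
    have mdeg: "n - int k * e = m n * g" if "n \<in> N" for n
    proof -
      have "c n * \<alpha> \<in> gr (n + a)" using zg_mult[OF zg] c(2) aa by blast
      moreover have "\<alpha> * f ^ k \<in> gr (a + int k * e)" using pow_deg[OF zg aa fgr] .
      moreover have "c n * \<alpha> \<noteq> 0" "\<alpha> * f ^ k \<noteq> 0" using that N_def assms(3) f0 by auto
      ultimately have "(n + a) - (a + int k * e) \<in> T" unfolding T_def by blast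
      then have "n - int k * e \<in> T" by simp
      from Tdvd[OF this] show ?thesis by (simp add: m_def)
    qed
    have minj: "inj_on m N"
    proof (rule inj_onI)
      fix n1 n2 assume "n1 \<in> N" "n2 \<in> N" "m n1 = m n2"
      then have "n1 - int k * e = n2 - int k * e" using mdeg by simp
      then show "n1 = n2" by simp
    qed
    define d where "d n = Fract (c n) (f ^ k) * w powi (- m n)" for n
    have dpiece: "d n \<in> loc_piece gr f e 0" if "n \<in> N" for n
    proof -
      have "m n * g + int k * e = n" using mdeg[OF that] by linarith
      then have "Fract (c n) (f ^ k) \<in> loc_piece gr f e (m n * g)"
        unfolding piece_iff using c(2) by metis
      from piece_mult[OF zg this wpow[of "- m n"]] show ?thesis by (simp add: d_def)
    qed
    have dw: "d n * w powi (m n) = Fract (c n) (f ^ k)" for n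
    proof -
      have "w powi (- m n) * w powi (m n) = 1" using w0 by (simp add: power_int_minus)
      then show ?thesis by (simp add: d_def mult.assoc)
    qed
    define iv where "iv i = the_inv_into N m i" for i
    have ivm: "iv (m n) = n" if "n \<in> N" for n using minj that by (simp add: iv_def the_inv_into_f_f)
    have "x = (\<Sum>n\<in>N. Fract (c n) (f ^ k))" using x c(3) fract_sum[of "f ^ k" N c] f0 c(1) N_def by simp
    also have "\<dots> = (\<Sum>n\<in>N. d n * w powi (m n))" using dw by simp
    also have "\<dots> = (\<Sum>n\<in>N. d (iv (m n)) * w powi (m n))" using ivm by simp
    also have "\<dots> = (\<Sum>i\<in>m ` N. d (iv i) * w powi i)" by (simp add: sum.reindex minj)
    finally have xs: "x = (\<Sum>i\<in>m ` N. d (iv i) * w powi i)" .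
    have "finite (m ` N)" using c(1) N_def by simp
    moreover have "\<forall>i\<in>m ` N. d (iv i) \<in> loc_piece gr f e 0" using ivm dpiece by auto
    ultimately show "x \<in> laurent_adjoin (loc_piece gr f e 0) w"
      unfolding laurent_adjoin_def mem_Collect_eq
      apply (rule_tac x="m ` N" in exI)
      apply (rule_tac x="\<lambda>i. d (iv i)" in exI)
      using xs by simp
  qed
  have sub2: "laurent_adjoin (loc_piece gr f e 0) w \<subseteq> loc f"
  proof
    fix x assume "x \<in> laurent_adjoin (loc_piece gr f e 0) w"
    then obtain I c where h: "x = (\<Sum>i\<in>I. c i * w powi i)" "finite I" "\<forall>i\<in>I. c i \<in> loc_piece gr f e 0"
      unfolding laurent_adjoin_def by blast
    have "\<forall>i\<in>I. c i * w powi i \<in> loc f"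
    proof
      fix i assume "i \<in> I"
      then have "c i \<in> loc f" using h(3) piece_loc by blast
      moreover have "w powi i \<in> loc f" using wpow piece_loc by blast
      ultimately show "c i * w powi i \<in> loc f" by (rule loc_mult)
    qed
    then show "x \<in> loc f" using loc_sum[OF f0 h(2)] h(1) by simp
  qed
  have indep: "laurent_independent (loc_piece gr f e 0) w"
    unfolding laurent_independent_def
  proof (intro allI impI)
    fix c :: "int \<Rightarrow> 'a fract" and j
    assume H: "finite {i. c i \<noteq> 0} \<and> (\<forall>i. c i \<in> loc_piece gr f e 0) \<and>
        (\<Sum>i\<in>{i. c i \<noteq> 0}. c i * w powi i) = 0"
    define S where "S = {i. c i \<noteq> 0}"
    have finS: "finite S" using H S_def by simp
    have mem: "\<forall>i\<in>S. c i * w powi i \<in> loc_piece gr f e (i * g)"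
      using piece_mult[OF zg _ wpow] H by fastforce
    obtain K b where Kb: "\<forall>i\<in>S. c i * w powi i = Fract (b i) (f ^ K) \<and> b i \<in> gr (i * g + int K * e)"
      using piece_common[OF zg fgr f0 finS mem] by blast
    have "Fract (sum b S) (f ^ K) = (\<Sum>i\<in>S. Fract (b i) (f ^ K))"
      using fract_sum[of "f ^ K" S b] f0 finS by simp
    also have "\<dots> = (\<Sum>i\<in>S. c i * w powi i)" using Kb by simp
    also have "\<dots> = 0" using H S_def by simp
    finally have "Fract (sum b S) (f ^ K) = 0" .
    then have s0: "sum b S = 0" using f0 by (simp add: Zero_fract_def eq_fract)
    have inj: "inj_on (\<lambda>i. i * g + int K * e) S"
      by (rule inj_onI) (use gpos in simp)
    have "\<forall>i\<in>S. b i = 0" using zg_unique0[OF zg finS inj _ s0] Kb by blast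
    then have "\<forall>i\<in>S. c i * w powi i = 0" using Kb by (simp add: fract_collapse)
    then have "\<forall>i\<in>S. c i = 0" using w0 by simp
    then show "c j = 0" using S_def by auto
  qed
  show ?thesis
  proof (intro exI conjI)
    show "f \<in> gr e" by (rule fgr)
    show "f = \<alpha> * (p * q)" by (simp add: f_def)
    show "f \<noteq> 0" by (rule f0)
    show "w \<in> loc f" by (rule wloc)
    show "\<exists>v\<in>loc f. w * v = 1" using vloc wv by blast
    show "loc_homogeneous gr f e w" unfolding loc_homogeneous_def using wpiece by blast
    show "loc f = laurent_adjoin (loc_piece gr f e 0) w" using sub1 sub2 by blast
    show "laurent_independent (loc_piece gr f e 0) w" by (rule indep)
  qed
qed

end
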